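(* Let $n>m\geq 2$ and let $X$ be a random variable on $\mathcal{X}=\{x_1,\ldots,x_n\}$ with distribution $\mathbf{p}=(p_1,\ldots,p_n)$, where $p_1\geq\cdots\geq p_n\geq 0$. Then for every $f\in\mathcal{F}_m$, $$H(f(X))\leq H(R_m(\mathbf{p})).$$
   Context: $H$ is Shannon entropy in bits. $\mathcal{F}_m$ is the set of surjective functions from $\mathcal{X}$ onto a fixed $m$-element set. Definition of $R_m(\mathbf{p})=(r_1,\ldots,r_m)$: if $p_1<1/m$, then $R_m(\mathbf{p})=(1/m,\ldots,1/m)$. If $p_1\geq 1/m$, let $i^*$ be the maximum index $i\in\{1,\ldots,m-1\}$ with $p_i\geq \frac{\sum_{j=i+1}^n p_j}{m-i}$. Then $r_i=p_i$ for $i\leq i^*$ and $r_i=\frac{\sum_{j=i^*+1}^n p_j}{m-i^*}$ for $i=i^*+1,\ldots,m$. *)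

theory Defs
  imports Complex_Main
begin

definition entropy_bits :: "nat \<Rightarrow> (nat \<Rightarrow> real) \<Rightarrow> real" where
  "entropy_bits k q = - (\<Sum>i=1..k. if q i = 0 then 0 else q i * log 2 (q i))"

definition push_dist :: "nat \<Rightarrow> (nat \<Rightarrow> nat) \<Rightarrow> (nat \<Rightarrow> real) \<Rightarrow> nat \<Rightarrow> real" where
  "push_dist n f p j = (\<Sum>i\<in>{i\<in>{1..n}. f i = j}. p i)"

definition istar :: "nat \<Rightarrow> nat \<Rightarrow> (nat \<Rightarrow> real) \<Rightarrow> nat" where
  "istar n m p = Max {i\<in>{1..m-1}. p i \<ge> (\<Sum>j=i+1..n. p j) / real (m - i)}"

definition R_m :: "nat \<Rightarrow> nat \<Rightarrow> (nat \<Rightarrow> real) \<Rightarrow> nat \<Rightarrow> real" where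
  "R_m n m p = (if p 1 < 1 / real m then (\<lambda>i. 1 / real m)
     else (\<lambda>i. if i \<le> istar n m p then p i
                else (\<Sum>j=istar n m p + 1..n. p j) / real (m - istar n m p)))"

end

theory Submission
  imports Defs
begin

lemma gibbs:
  fixes q r :: "nat \<Rightarrow> real"
  assumes "finite A" "\<And>j. j\<in>A \<Longrightarrow> q j \<ge> 0" "\<And>j. j\<in>A \<Longrightarrow> r j \<ge> 0"
    "\<And>j. j\<in>A \<Longrightarrow> q j > 0 \<Longrightarrow> r j > 0" "sum q A = 1" "sum r A \<le> 1"
  shows "-(\<Sum>j\<in>A. if q j = 0 then 0 else q j * log 2 (q j)) \<le> -(\<Sum>j\<in>A. q j * log 2 (r j))"
proof -
  have t: "(q j - r j)/ln 2 \<le> (if q j = 0 then 0 else q j * log 2 (q j)) - q j * log 2 (r j)"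
    if "j\<in>A" for j
  proof (cases "q j = 0")
    case True then show ?thesis using assms(3)[OF that] by simp
  next
    case False
    then have qp: "q j > 0" using assms(2)[OF that] by simp
    then have rp: "r j > 0" using assms(4) that by blast
    have "ln (r j / q j) \<le> r j / q j - 1" by (rule ln_le_minus_one) (use qp rp in simp)
    then have "q j * ln (r j / q j) \<le> q j * (r j / q j - 1)" using qp by (simp add: mult_left_mono)
    also have "\<dots> = r j - q j" using qp by (simp add: field_simps)
    finally have "q j * ln (r j / q j) \<le> r j - q j" .
    moreover have "ln (r j / q j) = ln (r j) - ln (q j)" using qp rp by (simp add: ln_div)
    ultimately have "q j - r j \<le> q j * ln (q j) - q j * ln (r j)" by (simp add: algebra_simps)
    then have "(q j - r j)/ln 2 \<le> (q j * ln (q j) - q j * ln (r j))/ln 2"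
      by (simp add: divide_right_mono)
    then show ?thesis using False by (simp add: log_def diff_divide_distrib)
  qed
  have "0 \<le> (sum q A - sum r A) / ln 2" using assms(5,6) by simp
  also have "\<dots> = (\<Sum>j\<in>A. (q j - r j)/ln 2)" by (simp add: sum_divide_distrib[symmetric] sum_subtractf)
  also have "\<dots> \<le> (\<Sum>j\<in>A. (if q j = 0 then 0 else q j * log 2 (q j)) - q j * log 2 (r j))"
    by (rule sum_mono) (rule t)
  finally show ?thesis by (simp add: sum_subtractf)
qed

lemma split_sum_nat:
  fixes g :: "nat \<Rightarrow> real"
  assumes "k \<le> n"
  shows "(\<Sum>i=1..n. g i) = (\<Sum>i=1..k. g i) + (\<Sum>i=k+1..n. g i)"
proof -
  have "(\<Sum>i=1..k + (n-k). g i) = (\<Sum>i=1..k. g i) + (\<Sum>i=k+1..k+(n-k). g i)"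
    by (rule sum.ub_add_nat) simp
  then show ?thesis using assms by simp
qed

theorem corollary3:
  fixes n m :: nat and p :: "nat \<Rightarrow> real" and f :: "nat \<Rightarrow> nat"
  assumes "n > m" and "m \<ge> 2"
    and "\<And>i. i \<in> {1..n} \<Longrightarrow> p i \<ge> 0"
    and "(\<Sum>i=1..n. p i) = 1"
    and "\<And>i j. 1 \<le> i \<Longrightarrow> i \<le> j \<Longrightarrow> j \<le> n \<Longrightarrow> p i \<ge> p j"
    and "f ` {1..n} = {1..m}"
  shows "entropy_bits m (push_dist n f p) \<le> entropy_bits m (R_m n m p)"
proof -
  note pnn = assms(3) and mono = assms(5) and surj = assms(6)
  define q where "q = push_dist n f p"
  have fin: "f ` {1..n} \<subseteq> {1..m}" using surj by simp
  have sumq: "sum q {1..m} = 1"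
    unfolding q_def push_dist_def using sum.group[OF _ _ fin, of p] assms(4) by simp
  have qnn: "q j \<ge> 0" for j unfolding q_def push_dist_def by (rule sum_nonneg) (use pnn in auto)
  have rew: "(\<Sum>j\<in>{1..m}. q j * log 2 (r j)) = (\<Sum>i\<in>{1..n}. p i * log 2 (r (f i)))"
    for r :: "nat \<Rightarrow> real"
  proof -
    have "(\<Sum>j\<in>{1..m}. q j * log 2 (r j))
        = (\<Sum>j\<in>{1..m}. \<Sum>i\<in>{i\<in>{1..n}. f i = j}. p i * log 2 (r (f i)))"
      unfolding q_def push_dist_def by (intro sum.cong refl) (auto simp: sum_distrib_right)
    also have "\<dots> = (\<Sum>i\<in>{1..n}. p i * log 2 (r (f i)))"
      using sum.group[OF _ _ fin, of "\<lambda>i. p i * log 2 (r (f i))"] by simp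
    finally show ?thesis .
  qed
  have Hq: "entropy_bits m q \<le> - (\<Sum>i\<in>{1..n}. p i * log 2 (r (f i)))"
    if "\<And>j. j \<in> {1..m} \<Longrightarrow> r j \<ge> 0" "\<And>j. j\<in>{1..m} \<Longrightarrow> q j > 0 \<Longrightarrow> r j > 0"
       "sum r {1..m} \<le> 1" for r
    unfolding entropy_bits_def rew[symmetric]
    by (rule gibbs) (use that sumq qnn in auto)
  show ?thesis
  proof (cases "p 1 < 1 / real m")
    case True
    have "entropy_bits m q \<le> - (\<Sum>i\<in>{1..n}. p i * log 2 ((\<lambda>_. 1 / real m) (f i)))"
      by (rule Hq) (use assms(2) in auto)
    also have "\<dots> = - log 2 (1 / real m)"
      using assms(4) by (simp add: sum_distrib_right[symmetric])
    also have "\<dots> = entropy_bits m (R_m n m p)"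
      unfolding entropy_bits_def R_m_def using True assms(2) by simp
    finally show ?thesis unfolding q_def .
  next
    case False
    note notunif = False
    define S where "S = {i\<in>{1..m-1}. p i \<ge> (\<Sum>j=i+1..n. p j) / real (m - i)}"
    define k where "k = istar n m p"
    have kS: "k = Max S" unfolding k_def istar_def S_def by simp
    have "1 \<in> S"
    proof -
      have s: "(\<Sum>j=1+1..n. p j) = 1 - p 1"
        using split_sum_nat[of 1 n p] assms(1,4) by simp
      have "1 / real m \<le> p 1" using False by simp
      then have "1 \<le> real m * p 1" using assms(2) by (simp add: field_simps)
      then have "(1 - p 1) / real (m - 1) \<le> p 1" using assms(2)
        by (simp add: divide_le_eq of_nat_diff algebra_simps)
      then show ?thesis unfolding S_def using s assms(2) by simp
    qed
    have finS: "finite S" unfolding S_def by simp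
    have kin: "k \<in> S" unfolding kS using \<open>1 \<in> S\<close> finS by (intro Max_in) auto
    define T where "T = (\<Sum>j=k+1..n. p j)"
    define t where "t = T / real (m - k)"
    have k1: "1 \<le> k" and km: "k \<le> m - 1" and pkt: "p k \<ge> t"
      using kin unfolding S_def t_def T_def by auto
    have kn: "k < n" using km assms(1,2) by simp
    have mk: "real (m - k) > 0" using km assms(2) by simp
    have Tnn: "T \<ge> 0" unfolding T_def by (rule sum_nonneg) (use pnn kn in auto)
    have tnn: "t \<ge> 0" unfolding t_def using Tnn mk by simp
    have sum1: "(\<Sum>i=1..k. p i) + T = 1" unfolding T_def
      using split_sum_nat[of k n p] kn assms(4) by simp
    have Tt: "T = real (m - k) * t" unfolding t_def using mk by simp
    have Tge: "T \<ge> p i" if "k < i" "i \<le> n" for i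
      unfolding T_def by (rule member_le_sum) (use that pnn in auto)
    have pge: "p i \<ge> t" if "1 \<le> i" "i \<le> k" for i
      using mono[of i k] that kn pkt by simp
    have Rform: "R_m n m p = (\<lambda>i. if i \<le> k then p i else t)"
      unfolding R_m_def k_def t_def T_def by (subst if_not_P[OF notunif]) (rule refl)
    define l where "l j = Min {i\<in>{1..n}. f i = j}" for j
    have lprop: "l j \<in> {1..n} \<and> f (l j) = j \<and> (\<forall>i\<in>{1..n}. f i = j \<longrightarrow> l j \<le> i)"
      if "j \<in> {1..m}" for j
    proof -
      have "j \<in> f ` {1..n}" using that surj by simp
      then obtain i0 where i0: "i0 \<in> {1..n}" "f i0 = j" by blast
      have finB: "finite {i\<in>{1..n}. f i = j}" by simp
      have ne: "{i\<in>{1..n}. f i = j} \<noteq> {}" using i0 by blast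
      have a: "l j \<in> {i\<in>{1..n}. f i = j}" unfolding l_def using finB ne by (rule Min_in)
      have b: "\<forall>i\<in>{1..n}. f i = j \<longrightarrow> l j \<le> i"
      proof (intro ballI impI)
        fix i assume "i \<in> {1..n}" "f i = j"
        then have "i \<in> {i\<in>{1..n}. f i = j}" by blast
        then show "l j \<le> i" unfolding l_def using finB by (rule Min_le[rotated])
      qed
      from a b show ?thesis by blast
    qed
    define r where "r j = (if l j \<le> k then p (l j) else t)" for j
    have rnn: "r j \<ge> 0" if "j \<in> {1..m}" for j
      using lprop[OF that] pnn tnn unfolding r_def by auto
    have rge: "r (f i) \<ge> t" if "i \<in> {1..n}" "k < i" for i
    proof -
      have fi: "f i \<in> {1..m}" using that surj by blast
      show ?thesis using lprop[OF fi] pge unfolding r_def by auto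
    qed
    have rpos: "r j > 0" if j: "j \<in> {1..m}" and qj: "q j > 0" for j
    proof -
      obtain i where i: "i \<in> {1..n}" "f i = j" "p i > 0"
      proof (rule ccontr)
        assume "\<not> thesis"
        with that have "\<forall>i\<in>{i\<in>{1..n}. f i = j}. p i \<le> 0" by force
        then have "q j \<le> 0" unfolding q_def push_dist_def by (intro sum_nonpos) auto
        with qj show False by simp
      qed
      have li: "l j \<le> i" "l j \<in> {1..n}" using lprop[OF j] i by auto
      have "p (l j) \<ge> p i" using mono[of "l j" i] li i by auto
      show ?thesis
      proof (cases "l j \<le> k")
        case True then show ?thesis unfolding r_def using \<open>p (l j) \<ge> p i\<close> i by simp
      next
        case False
        then have "T > 0" using Tge[of i] li i by simp
        then show ?thesis unfolding r_def t_def using False mk by simp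
      qed
    qed
    have rsum: "sum r {1..m} \<le> 1"
    proof -
      define B1 where "B1 = {j\<in>{1..m}. l j \<le> k}"
      define B2 where "B2 = {j\<in>{1..m}. \<not> l j \<le> k}"
      define L where "L = l ` B1"
      have injl: "inj_on l {1..m}"
      proof (rule inj_onI)
        fix a b assume ab: "a \<in> {1..m}" "b \<in> {1..m}" "l a = l b"
        have "a = f (l a)" using lprop[OF ab(1)] by simp
        also have "\<dots> = f (l b)" using ab(3) by simp
        also have "\<dots> = b" using lprop[OF ab(2)] by simp
        finally show "a = b" .
      qed
      have LS: "L \<subseteq> {1..k}"
      proof
        fix x assume "x \<in> L"
        then obtain j where j: "j \<in> {1..m}" "l j \<le> k" "x = l j" unfolding L_def B1_def by blast
        show "x \<in> {1..k}" using lprop[OF j(1)] j by auto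
      qed
      have cL: "card L = card B1" unfolding L_def
        by (rule card_image) (rule inj_on_subset[OF injl], auto simp: B1_def)
      have cB: "card B1 + card B2 = m"
      proof -
        have "card B1 + card B2 = card (B1 \<union> B2)"
          by (rule card_Un_disjoint[symmetric]) (auto simp: B1_def B2_def)
        also have "B1 \<union> B2 = {1..m}" by (auto simp: B1_def B2_def)
        finally show ?thesis by simp
      qed
      have cLk: "card L \<le> k" using card_mono[OF _ LS] by simp
      have U: "{1..m} = B1 \<union> B2" by (auto simp: B1_def B2_def)
      have "sum r {1..m} = sum r B1 + sum r B2"
        unfolding U by (rule sum.union_disjoint) (auto simp: B1_def B2_def)
      also have "sum r B1 = sum p L"
        unfolding L_def by (subst sum.reindex) (auto intro: inj_on_subset[OF injl] simp: B1_def r_def)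
      also have "sum r B2 = real (card B2) * t" by (simp add: r_def B2_def)
      finally have e1: "sum r {1..m} = sum p L + real (card B2) * t" .
      have "(\<Sum>i=1..k. p i) = sum p L + sum p ({1..k} - L)"
        using sum.subset_diff[OF LS, of p] by (simp add: add.commute)
      moreover have "sum p ({1..k} - L) \<ge> real (card ({1..k} - L)) * t"
        using sum_mono[of "{1..k} - L" "\<lambda>_. t" p] pge by simp
      moreover have "card ({1..k} - L) = k - card L"
        using card_Diff_subset[OF _ LS] LS finite_subset by auto
      ultimately have "sum p L + real (k - card L) * t \<le> (\<Sum>i=1..k. p i)" by simp
      then have "sum p L + (real k - real (card L)) * t \<le> (\<Sum>i=1..k. p i)"
        using cLk by (simp add: of_nat_diff)
      then have h1: "sum p L + real k * t - real (card L) * t \<le> (\<Sum>i=1..k. p i)"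
        by (simp add: algebra_simps)
      have "real (card B2) = real m - real (card L)" using cB cL by simp
      then have h2: "real (card B2) * t = real m * t - real (card L) * t"
        by (simp add: left_diff_distrib)
      have "T = (real m - real k) * t" using Tt km by (simp add: of_nat_diff)
      then have h3: "T = real m * t - real k * t" by (simp add: algebra_simps)
      show ?thesis using e1 sum1 h1 h2 h3 by linarith
    qed
    have H1: "entropy_bits m q \<le> - (\<Sum>i\<in>{1..n}. p i * log 2 (r (f i)))"
      by (rule Hq) (use rnn rpos rsum in auto)
    define g where "g i = (if i \<le> k then (if p i = 0 then 0 else p i * log 2 (p i)) else p i * log 2 t)" for i
    have gle: "g i \<le> p i * log 2 (r (f i))" if i: "i \<in> {1..n}" for i
    proof (cases "p i = 0")
      case True then show ?thesis by (simp add: g_def)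
    next
      case False
      then have pi: "p i > 0" using pnn[OF i] by simp
      have fi: "f i \<in> {1..m}" using i surj by blast
      show ?thesis
      proof (cases "i \<le> k")
        case True
        have li: "l (f i) \<le> i" "l (f i) \<in> {1..n}" using lprop[OF fi] i by auto
        then have "r (f i) = p (l (f i))" using True by (simp add: r_def)
        moreover have "p (l (f i)) \<ge> p i" using mono[of "l (f i)" i] li i by auto
        ultimately have "log 2 (p i) \<le> log 2 (r (f i))" using pi by simp
        then show ?thesis using True False pi by (simp add: g_def mult_left_mono)
      next
        case False
        have "T > 0" using Tge[of i] i False pi by simp
        then have tp: "t > 0" unfolding t_def using mk by simp
        have "log 2 t \<le> log 2 (r (f i))" using rge[OF i] False tp by simp
        then show ?thesis using False pi by (simp add: g_def mult_left_mono)
      qed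
    qed
    have "entropy_bits m q \<le> - (\<Sum>i\<in>{1..n}. g i)"
      using H1 sum_mono[of "{1..n}" g "\<lambda>i. p i * log 2 (r (f i))"] gle by simp
    also have "(\<Sum>i\<in>{1..n}. g i) = (\<Sum>i=1..k. g i) + (\<Sum>i=k+1..n. g i)"
      using split_sum_nat kn by simp
    also have "(\<Sum>i=1..k. g i) = (\<Sum>i=1..k. if p i = 0 then 0 else p i * log 2 (p i))"
      by (rule sum.cong) (auto simp: g_def)
    also have "(\<Sum>i=k+1..n. g i) = T * log 2 t"
      unfolding T_def by (simp add: g_def sum_distrib_right)
    also have "T * log 2 t = (\<Sum>i=k+1..m. if t = 0 then 0 else t * log 2 t)"
      using Tt km by simp
    also have "(\<Sum>i=1..k. if p i = 0 then 0 else p i * log 2 (p i)) + (\<Sum>i=k+1..m. if t = 0 then 0 else t * log 2 t)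
        = (\<Sum>i=1..m. if R_m n m p i = 0 then 0 else R_m n m p i * log 2 (R_m n m p i))"
    proof -
      have "(\<Sum>i=1..m. if R_m n m p i = 0 then 0 else R_m n m p i * log 2 (R_m n m p i))
          = (\<Sum>i=1..k. if R_m n m p i = 0 then 0 else R_m n m p i * log 2 (R_m n m p i))
            + (\<Sum>i=k+1..m. if R_m n m p i = 0 then 0 else R_m n m p i * log 2 (R_m n m p i))"
        using split_sum_nat km by simp
      also have "(\<Sum>i=1..k. if R_m n m p i = 0 then 0 else R_m n m p i * log 2 (R_m n m p i))
          = (\<Sum>i=1..k. if p i = 0 then 0 else p i * log 2 (p i))"
        by (rule sum.cong) (auto simp: Rform)
      also have "(\<Sum>i=k+1..m. if R_m n m p i = 0 then 0 else R_m n m p i * log 2 (R_m n m p i))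
          = (\<Sum>i=k+1..m. if t = 0 then 0 else t * log 2 t)"
        by (rule sum.cong) (auto simp: Rform)
      finally show ?thesis by simp
    qed
    finally show ?thesis unfolding q_def entropy_bits_def .
  qed
qed

end
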